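(* Fix an integer $k$ and a positive integer $N$. Let $\alpha_i,\beta_i,p_i,q_i,\eta_i,\xi_i$ ($i=1,\dots,N$) be real numbers, and let $F$ be the $N\times N$ matrix with entries $$F_{ij}=\alpha_ip_i^{k+j-1}e^{\eta_i}+\beta_iq_i^{k+j-1}e^{\xi_i},\qquad i,j=1,\dots,N.$$ Suppose $$q_N<q_{N-1}<\cdots<q_1<0<p_1<p_2<\cdots<p_N,\qquad \alpha_i>0,\qquad \operatorname{sgn}\beta_i=(-1)^{k+i-1}\quad(i=1,\dots,N).$$ Then $\det F>0$.
   Context: $\operatorname{sgn}$ denotes the sign function ($\operatorname{sgn}x=1$ for $x>0$, $-1$ for $x<0$). *)

theory Defs
  imports Complex_Main "Jordan_Normal_Form.Determinant"
begin

(* Indices are 0-based: paper's index i (1..N) corresponds to i-1 here. *)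
definition Fmat :: "int \<Rightarrow> nat \<Rightarrow> (nat \<Rightarrow> real) \<Rightarrow> (nat \<Rightarrow> real) \<Rightarrow> (nat \<Rightarrow> real)
   \<Rightarrow> (nat \<Rightarrow> real) \<Rightarrow> (nat \<Rightarrow> real) \<Rightarrow> (nat \<Rightarrow> real) \<Rightarrow> real mat" where
  "Fmat k N \<alpha> \<beta> p q \<eta> \<xi> = mat N N (\<lambda>(i, j).
      \<alpha> i * p i powi (k + int j) * exp (\<eta> i) + \<beta> i * q i powi (k + int j) * exp (\<xi> i))"

end

theory Submission
  imports Defs
begin

lemma det_rows_scale:
  fixes c :: "nat \<Rightarrow> 'a::comm_ring_1"
  shows "det (mat n n (\<lambda>(i,j). c i * f i j)) = prod c {0..<n} * det (mat n n (\<lambda>(i,j). f i j))"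
proof -
  have A: "mat n n (\<lambda>(i,j). c i * f i j) \<in> carrier_mat n n" by simp
  have B: "mat n n (\<lambda>(i,j). f i j) \<in> carrier_mat n n" by simp
  show ?thesis unfolding det_def'[OF A] det_def'[OF B] sum_distrib_left
  proof (rule sum.cong[OF refl])
    fix p assume p: "p \<in> {p. p permutes {0..<n}}"
    have "(\<Prod>i = 0..<n. mat n n (\<lambda>(i,j). c i * f i j) $$ (i, p i)) = (\<Prod>i = 0..<n. c i * f i (p i))"
      using p by (intro prod.cong) (auto simp: permutes_def)
    moreover have "(\<Prod>i = 0..<n. mat n n (\<lambda>(i,j). f i j) $$ (i, p i)) = (\<Prod>i = 0..<n. f i (p i))"
      using p by (intro prod.cong) (auto simp: permutes_def)
    ultimately show "signof p * (\<Prod>i = 0..<n. mat n n (\<lambda>(i,j). c i * f i j) $$ (i, p i)) =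
       prod c {0..<n} * (signof p * (\<Prod>i = 0..<n. mat n n (\<lambda>(i,j). f i j) $$ (i, p i)))"
      by (simp add: prod.distrib)
  qed
qed

lemma vandermonde:
  fixes z :: "nat \<Rightarrow> 'a::comm_ring_1"
  shows "det (mat n n (\<lambda>(i,j). z i ^ j)) = (\<Prod>j<n. \<Prod>i<j. z j - z i)"
proof (induction n arbitrary: z)
  case 0
  then show ?case by (simp add: det_dim_zero)
next
  case (Suc n)
  define A where "A = mat (Suc n) (Suc n) (\<lambda>(i,j). z i ^ j)"
  define U where "U = mat (Suc n) (Suc n) (\<lambda>(i,j). if i = j then 1 else if j = Suc i then - z 0 else (0::'a))"
  define B where "B = mat (Suc n) (Suc n) (\<lambda>(i,j). if j = 0 then 1 else (z i - z 0) * z i ^ (j - 1))"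
  have Ac: "A \<in> carrier_mat (Suc n) (Suc n)" and Uc: "U \<in> carrier_mat (Suc n) (Suc n)"
    unfolding A_def U_def by auto
  have "upper_triangular U" unfolding U_def upper_triangular_def by auto
  then have dU: "det U = 1" using det_upper_triangular[OF _ Uc]
    by (simp add: prod_list_diag_prod U_def)
  have AU: "A * U = B"
  proof (rule eq_matI)
    fix i j assume i: "i < dim_row B" and j: "j < dim_col B"
    then have i: "i < Suc n" and j: "j < Suc n" unfolding B_def by auto
    have "(A * U) $$ (i,j) = (\<Sum>l<Suc n. z i ^ l * U $$ (l, j))"
      using i j Ac Uc by (simp add: scalar_prod_def A_def atLeast0LessThan)
    also have "\<dots> = (\<Sum>l<Suc n. (if l = j then z i ^ l else 0) + (if Suc l = j then - z 0 * z i ^ l else 0))"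
      using j by (intro sum.cong) (auto simp: U_def)
    also have "\<dots> = B $$ (i,j)"
    proof (cases j)
      case 0
      then show ?thesis using i j by (simp add: sum.distrib B_def)
    next
      case (Suc j')
      have "(\<Sum>l<Suc n. (if Suc l = j then - z 0 * z i ^ l else 0)) = (\<Sum>l<Suc n. (if l = j' then - z 0 * z i ^ l else 0))"
        using Suc by (intro sum.cong) auto
      then show ?thesis using i j Suc
        by (cases "Suc j' < n") (auto simp: sum.distrib B_def algebra_simps dest: Suc_lessI)
    qed
    finally show "(A * U) $$ (i,j) = B $$ (i,j)" .
  qed (auto simp: A_def B_def U_def)
  have "det A = det B" using det_mult[OF Ac Uc] dU AU by simp
  also have "det B = (\<Sum>j<Suc n. B $$ (0,j) * cofactor B 0 j)"
    by (rule laplace_expansion_row) (auto simp: B_def)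
  also have "\<dots> = cofactor B 0 0"
    by (subst sum.lessThan_Suc_shift) (simp add: B_def)
  also have "\<dots> = det (mat_delete B 0 0)" by (simp add: cofactor_def)
  also have "mat_delete B 0 0 = mat n n (\<lambda>(i,j). (z (Suc i) - z 0) * z (Suc i) ^ j)"
    by (rule eq_matI) (auto simp: mat_delete_def B_def)
  also have "det \<dots> = (\<Prod>i=0..<n. z (Suc i) - z 0) * det (mat n n (\<lambda>(i,j). z (Suc i) ^ j))"
    by (rule det_rows_scale[where c = "\<lambda>i. z (Suc i) - z 0"])
  also have "\<dots> = (\<Prod>i<n. z (Suc i) - z 0) * (\<Prod>j<n. \<Prod>i<j. z (Suc j) - z (Suc i))"
    using Suc.IH[of "\<lambda>i. z (Suc i)"] by (simp add: atLeast0LessThan)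
  also have "\<dots> = (\<Prod>j<Suc n. \<Prod>i<j. z j - z i)"
    by (simp add: prod.lessThan_Suc_shift prod.distrib del: prod.lessThan_Suc)
  finally show ?case unfolding A_def .
qed

lemma factor_pos:
  fixes q :: real
  assumes "\<And>i. i < j \<Longrightarrow> y i > q"
  shows "(\<Prod>i<j. q - y i) = (-1)^j * (\<Prod>i<j. y i - q)" and "(\<Prod>i<j. y i - q) > 0"
proof -
  have "(\<Prod>i<j. q - y i) = (\<Prod>i<j. (-1) * (y i - q))" by simp
  also have "\<dots> = (-1)^j * (\<Prod>i<j. y i - q)" by (subst prod.distrib) simp
  finally show "(\<Prod>i<j. q - y i) = (-1)^j * (\<Prod>i<j. y i - q)" .
  show "(\<Prod>i<j. y i - q) > 0" using assms by (intro prod_pos) auto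
qed

theorem lemma4p6:
  fixes k :: int and N :: nat
    and \<alpha> \<beta> p q \<eta> \<xi> :: "nat \<Rightarrow> real"
  assumes "N > 0"
    and qd: "\<And>i j. i < j \<Longrightarrow> j < N \<Longrightarrow> q j < q i"
    and q0: "q 0 < 0" and p0: "0 < p 0"
    and pi: "\<And>i j. i < j \<Longrightarrow> j < N \<Longrightarrow> p i < p j"
    and al: "\<And>i. i < N \<Longrightarrow> \<alpha> i > 0"
    and be: "\<And>i. i < N \<Longrightarrow> sgn (\<beta> i) = (-1) powi (k + int i)"
  shows "det (Fmat k N \<alpha> \<beta> p q \<eta> \<xi>) > 0"
proof -
  have ppos: "p i > 0" if "i < N" for i
    using pi[of 0 i] that p0 by (cases i) auto
  have qneg: "q i < 0" if "i < N" for i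
    using qd[of 0 i] that q0 by (cases i) auto
  define a where "a i = \<alpha> i * p i powi k * exp (\<eta> i)" for i
  define b where "b i = \<beta> i * q i powi k * exp (\<xi> i)" for i
  define I where "I = {0..<N}"
  define c where "c X i = (if i \<in> X then b i else a i)" for X :: "nat set" and i
  define x where "x X i = (if i \<in> X then q i else p i)" for X :: "nat set" and i
  define M where "M X = mat N N (\<lambda>(i,j). c X i * x X i ^ j)" for X
  have F: "Fmat k N \<alpha> \<beta> p q \<eta> \<xi> = mat N N (\<lambda>(i,j). a i * p i ^ j + b i * q i ^ j)"
  proof (rule eq_matI)
    fix i j assume "i < dim_row (mat N N (\<lambda>(i,j). a i * p i ^ j + b i * q i ^ j))"
      "j < dim_col (mat N N (\<lambda>(i,j). a i * p i ^ j + b i * q i ^ j))"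
    then have i: "i < N" and j: "j < N" by auto
    have "p i \<noteq> 0" "q i \<noteq> 0" using ppos[OF i] qneg[OF i] by auto
    then show "Fmat k N \<alpha> \<beta> p q \<eta> \<xi> $$ (i, j) = mat N N (\<lambda>(i,j). a i * p i ^ j + b i * q i ^ j) $$ (i, j)"
      using i j by (simp add: Fmat_def a_def b_def power_int_add)
  qed (auto simp: Fmat_def)
  have Fc: "mat N N (\<lambda>(i,j). a i * p i ^ j + b i * q i ^ j) \<in> carrier_mat N N" by simp
  have Mc: "M X \<in> carrier_mat N N" for X unfolding M_def by simp
  have detF: "det (Fmat k N \<alpha> \<beta> p q \<eta> \<xi>) = (\<Sum>X\<in>Pow I. det (M X))"
  proof -
    have "det (Fmat k N \<alpha> \<beta> p q \<eta> \<xi>) = (\<Sum>pp \<in> {pp. pp permutes I}.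
       signof pp * (\<Prod>i\<in>I. a i * p i ^ pp i + b i * q i ^ pp i))"
      unfolding F det_def'[OF Fc] I_def
      by (intro sum.cong refl arg_cong2[where f="(*)"] prod.cong) (auto simp: permutes_def)
    also have "\<dots> = (\<Sum>pp \<in> {pp. pp permutes I}. \<Sum>X\<in>Pow I.
       signof pp * (\<Prod>i\<in>I. c X i * x X i ^ pp i))"
    proof (intro sum.cong refl)
      fix pp
      have "(\<Prod>i\<in>I. a i * p i ^ pp i + b i * q i ^ pp i) =
         (\<Prod>i\<in>I. b i * q i ^ pp i + a i * p i ^ pp i)" by (simp add: add.commute)
      also have "\<dots> = (\<Sum>X\<in>Pow I. (\<Prod>i\<in>X. b i * q i ^ pp i) * (\<Prod>i\<in>I - X. a i * p i ^ pp i))"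
        by (rule prod_add) (simp add: I_def)
      also have "\<dots> = (\<Sum>X\<in>Pow I. (\<Prod>i\<in>I. c X i * x X i ^ pp i))"
      proof (intro sum.cong refl)
        fix X assume "X \<in> Pow I"
        then have XI: "I \<inter> X = X" "I \<inter> - X = I - X" by auto
        have fI: "finite I" by (simp add: I_def)
        have "(\<Prod>i\<in>I. c X i * x X i ^ pp i) = (\<Prod>i\<in>I. if i \<in> X then b i * q i ^ pp i else a i * p i ^ pp i)"
          by (intro prod.cong refl) (simp add: c_def x_def)
        also have "\<dots> = (\<Prod>i\<in>X. b i * q i ^ pp i) * (\<Prod>i\<in>I - X. a i * p i ^ pp i)"
          by (subst prod.If_cases[OF fI]) (simp add: XI)
        finally show "(\<Prod>i\<in>X. b i * q i ^ pp i) * (\<Prod>i\<in>I - X. a i * p i ^ pp i) = (\<Prod>i\<in>I. c X i * x X i ^ pp i)" by simp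
      qed
      finally show "signof pp * (\<Prod>i\<in>I. a i * p i ^ pp i + b i * q i ^ pp i) =
        (\<Sum>X\<in>Pow I. signof pp * (\<Prod>i\<in>I. c X i * x X i ^ pp i))"
        by (simp add: sum_distrib_left)
    qed
    also have "\<dots> = (\<Sum>X\<in>Pow I. \<Sum>pp \<in> {pp. pp permutes I}. signof pp * (\<Prod>i\<in>I. c X i * x X i ^ pp i))"
      by (rule sum.swap)
    also have "\<dots> = (\<Sum>X\<in>Pow I. det (M X))"
    proof (intro sum.cong refl)
      fix X
      show "(\<Sum>pp \<in> {pp. pp permutes I}. signof pp * (\<Prod>i\<in>I. c X i * x X i ^ pp i)) = det (M X)"
        unfolding det_def'[OF Mc]
        by (intro sum.cong refl arg_cong2[where f="(*)"] prod.cong) (auto simp: M_def I_def permutes_def)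
    qed
    finally show ?thesis .
  qed
  have Mpos: "det (M X) > 0" if X: "X \<subseteq> I" for X
  proof -
    have "det (M X) = prod (c X) {0..<N} * (\<Prod>j<N. \<Prod>i<j. x X j - x X i)"
      unfolding M_def by (subst det_rows_scale) (simp add: vandermonde)
    also have "\<dots> = (\<Prod>j<N. c X j * (\<Prod>i<j. x X j - x X i))"
      by (simp add: prod.distrib atLeast0LessThan)
    also have "\<dots> > 0"
    proof (rule prod_pos)
      fix j assume "j \<in> {..<N}"
      then have j: "j < N" by simp
      have xgt: "x X i > q j" if "i < j" for i
        using that j qd[of i j] ppos[of i] qneg[of j] by (auto simp: x_def)
      show "0 < c X j * (\<Prod>i<j. x X j - x X i)"
      proof (cases "j \<in> X")
        case False
        have "0 < a j" unfolding a_def using al[OF j] ppos[OF j] by simp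
        moreover have "0 < (\<Prod>i<j. x X j - x X i)"
        proof (rule prod_pos)
          fix i assume "i \<in> {..<j}"
          then have "i < j" by simp
          then have "x X i < p j" using j pi[of i j] qneg[of i] ppos[of j] by (auto simp: x_def)
          then show "0 < x X j - x X i" using False by (simp add: x_def)
        qed
        ultimately show ?thesis using False by (simp add: c_def)
      next
        case True
        have e: "(\<Prod>i<j. x X j - x X i) = (-1)^j * (\<Prod>i<j. x X i - q j)"
          and P: "(\<Prod>i<j. x X i - q j) > 0"
          using factor_pos[where j=j and y="x X" and q="q j"] xgt True by (auto simp: x_def)
        have qk: "q j powi k = (-1) powi k * \<bar>q j\<bar> powi k"
        proof -
          have "q j = (-1) * \<bar>q j\<bar>" using qneg[OF j] by simp
          then show ?thesis by (metis power_int_mult_distrib)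
        qed
        have s: "(-1::real) powi k * (-1)^j = (-1) powi (k + int j)"
          by (simp add: power_int_add)
        have bnz: "\<beta> j \<noteq> 0" using be[OF j] by (auto simp: power_int_not_zero)
        have bb: "\<beta> j * (-1) powi (k + int j) > 0"
          using be[OF j, symmetric] bnz by (cases "\<beta> j > 0") (auto simp: sgn_if)
        have "c X j * (\<Prod>i<j. x X j - x X i) = (\<beta> j * (-1) powi (k + int j)) * \<bar>q j\<bar> powi k * exp (\<xi> j) * (\<Prod>i<j. x X i - q j)"
          using True by (simp add: c_def b_def e qk s[symmetric] algebra_simps)
        also have "\<dots> > 0" using bb P qneg[OF j] by simp
        finally show ?thesis .
      qed
    qed
    finally show ?thesis .
  qed
  show ?thesis unfolding detF
    by (rule sum_pos) (auto simp: I_def intro: Mpos[unfolded I_def])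
qed

end
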